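(* Let $(\nu_n)_{n\ge1}$ be a sequence of probability measures on $\mathbb{Z}$. The following are equivalent: (1) for every $\delta>0$, $\displaystyle\limsup_{n\to\infty}\ \sup_{\delta<|t|\le 1/2}|\hat{\nu}_n(t)|<1$; (2) there exist a constant $C>0$ and an integer $N_0$ such that $|\hat{\nu}_n(t)|\le e^{-Ct^2}$ for all $n>N_0$ and all $t\in[-1/2,1/2)$.
   Context: The Fourier transform of a probability measure $\nu$ on $\mathbb{Z}$ is $\hat{\nu}(t)=\sum_{k\in\mathbb{Z}}\nu(k)e^{2\pi ikt}$, $t\in[-1/2,1/2)$. *)

theory Defs
  imports "HOL-Probability.Probability"
begin

definition fourier_pmf :: "int pmf \<Rightarrow> real \<Rightarrow> complex" where
  "fourier_pmf \<nu> t = (\<Sum>\<^sub>\<infinity>k::int. complex_of_real (pmf \<nu> k) * exp (2 * pi * \<i> * of_int k * complex_of_real t))"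

end

theory Submission
  imports Defs
begin

lemma pmf_has_sum1: "(pmf \<nu> has_sum 1) (UNIV :: 'a set)"
proof -
  have a: "Infinite_Set_Sum.abs_summable_on (pmf \<nu>) UNIV" by (rule pmf_abs_summable)
  have "(\<lambda>x. norm (pmf \<nu> x)) summable_on UNIV" using a abs_summable_equivalent by blast
  hence s: "pmf \<nu> summable_on UNIV" by (rule abs_summable_summable)
  have "infsum (pmf \<nu>) UNIV = 1"
    using infsetsum_infsum[OF a] infsetsum_pmf_eq_1[of \<nu> UNIV] by simp
  thus ?thesis using has_sum_infsum[OF s] by simp
qed

lemma norm_e: "cmod (exp (2 * pi * \<i> * of_int k * complex_of_real t)) = 1"
proof -
  have "2 * pi * \<i> * of_int k * complex_of_real t = \<i> * complex_of_real (2*pi*k*t)" by simp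
  thus ?thesis by (simp only: norm_exp_i_times)
qed

lemma has_sum_F: "((\<lambda>k. complex_of_real (pmf \<nu> k) * exp (2 * pi * \<i> * of_int k * complex_of_real t)) has_sum fourier_pmf \<nu> t) UNIV"
proof -
  have "(\<lambda>k. norm (complex_of_real (pmf \<nu> k) * exp (2 * pi * \<i> * of_int k * complex_of_real t))) summable_on UNIV"
        using pmf_has_sum1[of \<nu>] by (simp add: norm_mult norm_e summable_on_def; blast)
  hence "(\<lambda>k. complex_of_real (pmf \<nu> k) * exp (2 * pi * \<i> * of_int k * complex_of_real t)) summable_on UNIV"
    by (rule abs_summable_summable)
  thus ?thesis unfolding fourier_pmf_def by simp
qed

lemma norm_F_le1: "cmod (fourier_pmf \<nu> t) \<le> 1"
proof -
  have "((\<lambda>k. cmod (complex_of_real (pmf \<nu> k) * exp (2 * pi * \<i> * of_int k * complex_of_real t))) has_sum 1) UNIV"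
    using pmf_has_sum1[of \<nu>] by (simp add: norm_mult norm_e)
  hence "Infinite_Sum.abs_summable_on (\<lambda>k. complex_of_real (pmf \<nu> k) * exp (2 * pi * \<i> * of_int k * complex_of_real t)) UNIV"
    unfolding summable_on_def by blast
  from norm_infsum_bound[OF this] show ?thesis
    using pmf_has_sum1[of \<nu>] unfolding fourier_pmf_def by (simp add: norm_mult norm_e infsumI)
qed


lemma has_sum_diff':
  fixes f g :: "'a \<Rightarrow> real"
  assumes "(f has_sum a) A" "(g has_sum b) A"
  shows "((\<lambda>x. f x - g x) has_sum (a - b)) A"
proof -
  have "((\<lambda>x. - g x) has_sum (- b)) A" using assms(2) has_sum_uminus[where f=g and a="-b" and A=A] by simp
  from has_sum_add[OF assms(1) this] show ?thesis by simp
qed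

lemma pt_ineq:
  assumes "cmod w = 1"
  shows "1 - Re (w^2) \<le> 4 * (1 - Re w)"
proof -
  obtain a b where w: "w = Complex a b" by (cases w)
  have "a^2 + b^2 = 1" using assms w by (simp add: cmod_def)
  moreover have "Re (w^2) = a^2 - b^2" using w by (simp add: power2_eq_square)
  moreover have "(a - 1)^2 \<ge> 0" by simp
  ultimately show ?thesis using w by (simp add: power2_eq_square algebra_simps)
qed

lemma doubling: "1 - cmod (fourier_pmf \<nu> (2*t)) \<le> 4 * (1 - cmod (fourier_pmf \<nu> t))"
proof -
  define F where "F = fourier_pmf \<nu> t"
  define F2 where "F2 = fourier_pmf \<nu> (2*t)"
  define c where "c = (if F = 0 then 1 else cnj F / complex_of_real (cmod F))"
  have c1: "cmod c = 1" unfolding c_def by (simp add: norm_divide)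
  have cF: "c * F = complex_of_real (cmod F)"
    unfolding c_def using complex_norm_square by (auto simp: power2_eq_square field_simps)
  define e where "e k = exp (2 * pi * \<i> * of_int k * complex_of_real t)" for k :: int
  have e1: "cmod (e k) = 1" for k unfolding e_def by (rule norm_e)
  have e2: "exp (2 * pi * \<i> * of_int k * complex_of_real (2*t)) = e k ^ 2" for k
    unfolding e_def by (simp add: exp_double[symmetric] algebra_simps)
  have h1: "((\<lambda>k. pmf \<nu> k * Re (c * e k)) has_sum cmod F) UNIV"
    using has_sum_Re[OF has_sum_cmult_right[OF has_sum_F[of \<nu> t], of c]] cF
    unfolding F_def e_def by (simp add: algebra_simps)
  have h2: "((\<lambda>k. pmf \<nu> k * Re ((c * e k)^2)) has_sum Re (c^2 * F2)) UNIV"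
    using has_sum_Re[OF has_sum_cmult_right[OF has_sum_F[of \<nu> "2*t"], of "c^2"]]
    unfolding F2_def e2 by (simp add: algebra_simps power_mult_distrib)
  have r: "Re (c^2 * F2) \<le> cmod F2"
    using complex_Re_le_cmod[of "c^2 * F2"] c1 by (simp add: norm_mult norm_power)
  have s1: "((\<lambda>k. pmf \<nu> k - pmf \<nu> k * Re ((c * e k)^2)) has_sum (1 - Re (c^2 * F2))) UNIV"
    by (rule has_sum_diff'[OF pmf_has_sum1 h2])
  have s2: "((\<lambda>k. 4 * (pmf \<nu> k - pmf \<nu> k * Re (c * e k))) has_sum (4 * (1 - cmod F))) UNIV"
    by (rule has_sum_cmult_right[OF has_sum_diff'[OF pmf_has_sum1 h1]])
  have "1 - Re (c^2 * F2) \<le> 4 * (1 - cmod F)"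
  proof (rule has_sum_mono[OF s1 s2])
    fix k :: int
    have w: "cmod (c * e k) = 1" using c1 e1 by (simp add: norm_mult)
    have "pmf \<nu> k * (1 - Re ((c * e k)^2)) \<le> pmf \<nu> k * (4 * (1 - Re (c * e k)))"
      by (rule mult_left_mono[OF pt_ineq[OF w]]) simp
    thus "pmf \<nu> k - pmf \<nu> k * Re ((c * e k)^2) \<le> 4 * (pmf \<nu> k - pmf \<nu> k * Re (c * e k))"
      by (simp add: algebra_simps)
  qed
  thus ?thesis using r unfolding F_def F2_def by linarith
qed


lemma F_shift: "fourier_pmf \<nu> (t + 1) = fourier_pmf \<nu> t"
proof -
  have "exp (2 * pi * \<i> * of_int k * complex_of_real (t+1)) = exp (2 * pi * \<i> * of_int k * complex_of_real t)" for k :: int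
  proof -
    have "2 * pi * \<i> * of_int k * complex_of_real (t+1) = 2 * pi * \<i> * of_int k * complex_of_real t + (2 * of_int k * pi) * \<i>"
      by (simp add: algebra_simps)
    hence "exp (2 * pi * \<i> * of_int k * complex_of_real (t+1)) = exp (2 * pi * \<i> * of_int k * complex_of_real t) * exp ((2 * of_int k * pi) * \<i>)"
      by (simp only: exp_add)
    also have "exp ((2 * of_int k * pi) * \<i>) = 1"
      by (rule exp_integer_2pi) simp
    finally show ?thesis by simp
  qed
  thus ?thesis unfolding fourier_pmf_def by simp
qed

lemma grow:
  fixes g :: "real \<Rightarrow> real"
  assumes dbl: "\<And>t. g (2*t) \<le> 4 * g t"
    and base: "\<And>s. 1/4 < \<bar>s\<bar> \<Longrightarrow> \<bar>s\<bar> \<le> 1/2 \<Longrightarrow> \<eta> \<le> g s"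
    and eta: "\<eta> \<ge> 0"
    and t: "\<bar>t\<bar> \<le> 1/2"
  shows "\<eta> * t^2 \<le> g t"
proof -
  have main: "\<forall>t. (1/2)^(n+2) < \<bar>t\<bar> \<and> \<bar>t\<bar> \<le> 1/2 \<longrightarrow> \<eta> * t^2 \<le> g t" for n
  proof (induction n)
    case 0
    show ?case
    proof (intro allI impI)
      fix t :: real assume h: "(1/2)^(0+2) < \<bar>t\<bar> \<and> \<bar>t\<bar> \<le> 1/2"
      hence "t^2 \<le> (1/2)^2" using abs_le_square_iff[of t "1/2"] by simp
      moreover have "(1/2::real)^2 = 1/4" by (simp add: power2_eq_square)
      ultimately have "t^2 \<le> 1" by linarith
      hence "\<eta> * t^2 \<le> \<eta>" using eta by (simp add: mult_left_le)
      also have "\<eta> \<le> g t" using h by (intro base) (auto simp: power2_eq_square)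
      finally show "\<eta> * t^2 \<le> g t" .
    qed
  next
    case (Suc n)
    show ?case
    proof (intro allI impI)
      fix t :: real assume h: "(1/2)^(Suc n+2) < \<bar>t\<bar> \<and> \<bar>t\<bar> \<le> 1/2"
      show "\<eta> * t^2 \<le> g t"
      proof (cases "(1/2)^(n+2) < \<bar>t\<bar>")
        case True thus ?thesis using Suc h by blast
      next
        case False
        have p: "((1::real)/2)^(n+2) \<le> 1/4" by (simp add: power_add power_le_one)
        have "(1/2)^(n+2) < \<bar>2*t\<bar> \<and> \<bar>2*t\<bar> \<le> 1/2"
          using h False p by auto
        hence "\<eta> * (2*t)^2 \<le> g (2*t)" using Suc by blast
        hence "4 * (\<eta> * t^2) \<le> 4 * g t" using dbl[of t] by (simp add: power_mult_distrib)
        thus ?thesis by simp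
      qed
    qed
  qed
  show ?thesis
  proof (cases "t = 0")
    case True
    have "g 0 \<le> 4 * g 0" using dbl[of 0] by simp
    thus ?thesis using True by simp
  next
    case False
    then obtain n where n: "(1/2::real)^n < \<bar>t\<bar>"
      using real_arch_pow_inv[of "\<bar>t\<bar>" "1/2"] by auto
    have "(1/2::real)^(n+2) \<le> (1/2)^n" by (rule power_decreasing) auto
    thus ?thesis using main[of n] n t by auto
  qed
qed


theorem lemma2p1p7:
  fixes \<nu> :: "nat \<Rightarrow> int pmf"
  shows "(\<forall>\<delta>::real. \<delta> > 0 \<longrightarrow>
            limsup (\<lambda>n. SUP t\<in>{t::real. \<delta> < \<bar>t\<bar> \<and> \<bar>t\<bar> \<le> 1/2}. ereal (cmod (fourier_pmf (\<nu> n) t))) < 1)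
     \<longleftrightarrow>
         (\<exists>C::real. C > 0 \<and> (\<exists>N0::nat. \<forall>n>N0. \<forall>t\<in>{-1/2..<1/2::real}.
            cmod (fourier_pmf (\<nu> n) t) \<le> exp (- C * t\<^sup>2)))"
proof
  assume H: "\<forall>\<delta>::real. \<delta> > 0 \<longrightarrow>
            limsup (\<lambda>n. SUP t\<in>{t::real. \<delta> < \<bar>t\<bar> \<and> \<bar>t\<bar> \<le> 1/2}. ereal (cmod (fourier_pmf (\<nu> n) t))) < 1"
  have "limsup (\<lambda>n. SUP t\<in>{t::real. 1/4 < \<bar>t\<bar> \<and> \<bar>t\<bar> \<le> 1/2}. ereal (cmod (fourier_pmf (\<nu> n) t))) < 1"
    using H[rule_format, of "1/4"] by simp
  then obtain a where a1: "limsup (\<lambda>n. SUP t\<in>{t::real. 1/4 < \<bar>t\<bar> \<and> \<bar>t\<bar> \<le> 1/2}. ereal (cmod (fourier_pmf (\<nu> n) t))) < ereal a"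
    and a2: "ereal a < 1" using ereal_dense2 by blast
  have "eventually (\<lambda>n. (SUP t\<in>{t::real. 1/4 < \<bar>t\<bar> \<and> \<bar>t\<bar> \<le> 1/2}. ereal (cmod (fourier_pmf (\<nu> n) t))) < ereal a) sequentially"
    by (rule Limsup_lessD[OF a1])
  then obtain N where N: "\<And>n. n \<ge> N \<Longrightarrow> (SUP t\<in>{t::real. 1/4 < \<bar>t\<bar> \<and> \<bar>t\<bar> \<le> 1/2}. ereal (cmod (fourier_pmf (\<nu> n) t))) < ereal a"
    unfolding eventually_sequentially by blast
  have a1': "a < 1" using a2 by simp
  define \<eta> where "\<eta> = 1 - a"
  have eta: "\<eta> > 0" using a1' unfolding \<eta>_def by simp
  have bound: "cmod (fourier_pmf (\<nu> n) t) \<le> exp (- \<eta> * t\<^sup>2)" if n: "n > N" and t: "\<bar>t\<bar> \<le> 1/2" for n t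
  proof -
    let ?g = "\<lambda>s. 1 - cmod (fourier_pmf (\<nu> n) s)"
    have "\<eta> * t^2 \<le> ?g t"
    proof (rule grow[OF _ _ _ t])
      fix s :: real
      show "?g (2 * s) \<le> 4 * ?g s" by (rule doubling)
    next
      fix s :: real assume "1/4 < \<bar>s\<bar>" "\<bar>s\<bar> \<le> 1/2"
      hence "ereal (cmod (fourier_pmf (\<nu> n) s)) \<le> (SUP t\<in>{t::real. 1/4 < \<bar>t\<bar> \<and> \<bar>t\<bar> \<le> 1/2}. ereal (cmod (fourier_pmf (\<nu> n) t)))"
        by (intro SUP_upper) auto
      also have "\<dots> < ereal a" using N n by simp
      finally show "\<eta> \<le> ?g s" unfolding \<eta>_def by simp
    next
      show "\<eta> \<ge> 0" using eta by simp
    qed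
    hence "cmod (fourier_pmf (\<nu> n) t) \<le> 1 + (- \<eta> * t\<^sup>2)" by simp
    also have "\<dots> \<le> exp (- \<eta> * t\<^sup>2)" by (rule exp_ge_add_one_self)
    finally show ?thesis .
  qed
  show "\<exists>C::real. C > 0 \<and> (\<exists>N0::nat. \<forall>n>N0. \<forall>t\<in>{-1/2..<1/2::real}.
            cmod (fourier_pmf (\<nu> n) t) \<le> exp (- C * t\<^sup>2))"
    using eta bound by (intro exI[of _ \<eta>] conjI exI[of _ N]) auto
next
  assume "\<exists>C::real. C > 0 \<and> (\<exists>N0::nat. \<forall>n>N0. \<forall>t\<in>{-1/2..<1/2::real}.
            cmod (fourier_pmf (\<nu> n) t) \<le> exp (- C * t\<^sup>2))"
  then obtain C N0 where C: "C > 0" and B: "\<And>n t. n > N0 \<Longrightarrow> t \<in> {-1/2..<1/2::real} \<Longrightarrow>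
            cmod (fourier_pmf (\<nu> n) t) \<le> exp (- C * t\<^sup>2)" by blast
  show "\<forall>\<delta>::real. \<delta> > 0 \<longrightarrow>
            limsup (\<lambda>n. SUP t\<in>{t::real. \<delta> < \<bar>t\<bar> \<and> \<bar>t\<bar> \<le> 1/2}. ereal (cmod (fourier_pmf (\<nu> n) t))) < 1"
  proof (intro allI impI)
    fix \<delta> :: real assume d: "\<delta> > 0"
    have ev: "eventually (\<lambda>n. (SUP t\<in>{t::real. \<delta> < \<bar>t\<bar> \<and> \<bar>t\<bar> \<le> 1/2}. ereal (cmod (fourier_pmf (\<nu> n) t))) \<le> ereal (exp (- C * \<delta>^2))) sequentially"
      unfolding eventually_sequentially
    proof (intro exI[of _ "Suc N0"] allI impI SUP_least)
      fix n t assume n: "Suc N0 \<le> n" and t: "t \<in> {t::real. \<delta> < \<bar>t\<bar> \<and> \<bar>t\<bar> \<le> 1/2}"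
      have "cmod (fourier_pmf (\<nu> n) t) \<le> exp (- C * t\<^sup>2)"
      proof (cases "t = 1/2")
        case True
        have "t = -1/2 + 1" using True by simp
        hence "fourier_pmf (\<nu> n) t = fourier_pmf (\<nu> n) (-1/2 + 1)" by (simp only:)
        also have "\<dots> = fourier_pmf (\<nu> n) (-1/2)" by (rule F_shift)
        finally have "cmod (fourier_pmf (\<nu> n) t) = cmod (fourier_pmf (\<nu> n) (-1/2))" by simp
        moreover have "t\<^sup>2 = (-1/2)\<^sup>2" using True by simp
        ultimately show ?thesis using B[of n "-1/2"] n by simp
      next
        case False
        have "t \<in> {-1/2..<1/2}" using False t by auto
        thus ?thesis using B[of n t] n by auto
      qed
      also have "exp (- C * t\<^sup>2) \<le> exp (- C * \<delta>^2)"
      proof -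
        have "\<delta>^2 \<le> t^2" using t d abs_le_square_iff[of \<delta> t] by simp
        thus ?thesis using C by simp
      qed
      finally show "ereal (cmod (fourier_pmf (\<nu> n) t)) \<le> ereal (exp (- C * \<delta>^2))" by simp
    qed
    have "limsup (\<lambda>n. SUP t\<in>{t::real. \<delta> < \<bar>t\<bar> \<and> \<bar>t\<bar> \<le> 1/2}. ereal (cmod (fourier_pmf (\<nu> n) t))) \<le> ereal (exp (- C * \<delta>^2))"
      by (rule Limsup_bounded[OF ev])
    also have "\<dots> < 1" using C d by simp
    finally show "limsup (\<lambda>n. SUP t\<in>{t::real. \<delta> < \<bar>t\<bar> \<and> \<bar>t\<bar> \<le> 1/2}. ereal (cmod (fourier_pmf (\<nu> n) t))) < 1" .
  qed
qed

end
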